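(* Let $v\in\mathcal{Z}^1$. Then the limit $\mathcal{P}(v)=\lim_{R\to+\infty}\frac12\int_{-R}^R\langle iv,v'\rangle$ exists. Moreover, if $v\in\tilde{\mathcal{Z}}^1$, writing $v=\varrho e^{i\varphi}$ on $\mathbb{R}$ with $\varrho=|v|>0$ and $\varphi$ a continuous real lift of the phase, the limits $\varphi(\pm\infty)$ exist, $(\varrho^2-1)\varphi'\in L^1(\mathbb{R})$, and $$\mathcal{P}(v)=\frac12\int_\mathbb{R}(\varrho^2-1)\varphi'+\frac12\big(\varphi(+\infty)-\varphi(-\infty)\big).$$
   Context: $\mathcal{X}^1=\{w\in L^\infty(\mathbb{R};\mathbb{C}):\ w'\in L^2,\ 1-|w|^2\in L^2\}$; $\mathcal{Z}^1=\{v\in\mathcal{X}^1:\ \lim_{x\to\pm\infty}v(x)\text{ exist}\}$; $\tilde{\mathcal{Z}}^1=\{v\in\mathcal{Z}^1:\ |v(x)|>0\ \forall x\in\mathbb{R}\}$. $\langle a,b\rangle=\mathrm{Re}(a\bar b)$. *)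

theory Defs
  imports "HOL-Analysis.Analysis"
begin

text \<open>g is a (weak) derivative of f in the sense of W^{1,1}_loc, with f the continuous
  (locally absolutely continuous) representative: f y - f x = integral of g over [x,y].\<close>
definition weak_deriv :: "(real \<Rightarrow> 'a::{banach,second_countable_topology}) \<Rightarrow> (real \<Rightarrow> 'a) \<Rightarrow> bool" where
  "weak_deriv f g \<longleftrightarrow>
     (\<forall>x y. x \<le> y \<longrightarrow> set_integrable lborel {x..y} g \<and> f y - f x = (LINT t:{x..y}|lborel. g t))"

text \<open>X^1: v in L^infty, v' in L^2, 1 - |v|^2 in L^2 (dv plays the role of v').\<close>
definition X1 :: "(real \<Rightarrow> complex) \<Rightarrow> (real \<Rightarrow> complex) \<Rightarrow> bool" where
  "X1 v dv \<longleftrightarrow> bounded (range v) \<and> weak_deriv v dv \<and> dv \<in> borel_measurable lborel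
     \<and> integrable lborel (\<lambda>x. (cmod (dv x))\<^sup>2)
     \<and> integrable lborel (\<lambda>x. (1 - (cmod (v x))\<^sup>2)\<^sup>2)"

definition Z1 :: "(real \<Rightarrow> complex) \<Rightarrow> (real \<Rightarrow> complex) \<Rightarrow> bool" where
  "Z1 v dv \<longleftrightarrow> X1 v dv \<and> (\<exists>l. (v \<longlongrightarrow> l) at_top) \<and> (\<exists>l. (v \<longlongrightarrow> l) at_bot)"

definition Z1_tilde :: "(real \<Rightarrow> complex) \<Rightarrow> (real \<Rightarrow> complex) \<Rightarrow> bool" where
  "Z1_tilde v dv \<longleftrightarrow> Z1 v dv \<and> (\<forall>x. cmod (v x) > 0)"

definition cinner :: "complex \<Rightarrow> complex \<Rightarrow> real" where
  "cinner a b = Re (a * cnj b)"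

end

theory Submission
  imports Defs
begin


lemma set_integral_Im:
  fixes f :: "real \<Rightarrow> complex"
  assumes "set_integrable lborel A f"
  shows "set_integrable lborel A (\<lambda>x. Im (f x))"
    and "Im (LINT x:A|lborel. f x) = (LINT x:A|lborel. Im (f x))"
proof -
  have e: "(\<lambda>x. Im (indicator A x *\<^sub>R f x)) = (\<lambda>x. indicator A x *\<^sub>R Im (f x))"
    by auto
  show "set_integrable lborel A (\<lambda>x. Im (f x))"
    using integrable_Im[of lborel "\<lambda>x. indicator A x *\<^sub>R f x"] assms
    unfolding set_integrable_def e by simp
  show "Im (LINT x:A|lborel. f x) = (LINT x:A|lborel. Im (f x))"
    unfolding set_lebesgue_integral_def
    using integral_bounded_linear[OF bounded_linear_Im, of lborel "\<lambda>x. indicator A x *\<^sub>R f x"] assms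
    unfolding set_integrable_def e by simp
qed

lemma set_integral_split:
  fixes f :: "real \<Rightarrow> 'a::{banach, second_countable_topology}"
  assumes "a \<le> s" "s \<le> t" "set_integrable lborel {a..t} f"
  shows "(LINT x:{a..t}|lborel. f x) = (LINT x:{a..s}|lborel. f x) + (LINT x:{s..t}|lborel. f x)"
proof -
  have u: "{a..t} = {a..s} \<union> {s..t}" using assms by auto
  have "AE x in lborel. \<not> (x \<in> {a..s} \<and> x \<in> {s..t})"
    using AE_lborel_singleton[of s] by eventually_elim auto
  then show ?thesis
    unfolding u
    by (rule set_integral_Un_AE) (use assms u in \<open>auto intro: set_integrable_subset\<close>)
qed



lemma set_integral_point: "(LINT x:{a}|lborel. (g x :: 'a::{banach, second_countable_topology})) = 0"
proof -
  have "(LINT x:{a}|lborel. g x) = integral\<^sup>L lborel (\<lambda>x. indicator {a} x *\<^sub>R g x)"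
    by (simp add: set_lebesgue_integral_def)
  also have "\<dots> = 0"
    by (rule integral_eq_zero_AE, rule AE_mp[OF AE_lborel_singleton[of a]]) (auto intro!: AE_I2 split: split_indicator dest: antisym)
  finally show ?thesis .
qed

lemma local_to_global:
  fixes f g h :: "real \<Rightarrow> real"
  assumes ab: "a \<le> b" and ig: "set_integrable lborel {a..b} g" and ih: "set_integrable lborel {a..b} h"
  and loc: "\<And>e. e > 0 \<Longrightarrow> \<exists>d>0. \<forall>s t. a \<le> s \<longrightarrow> s \<le> t \<longrightarrow> t \<le> b \<longrightarrow> t - s < d \<longrightarrow>
      \<bar>f t - f s - (LINT x:{s..t}|lborel. g x)\<bar> \<le> e * (LINT x:{s..t}|lborel. h x)"
  shows "f b - f a = (LINT x:{a..b}|lborel. g x)"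
proof -
  define D where "D = f b - f a - (LINT x:{a..b}|lborel. g x)"
  define H where "H = (LINT x:{a..b}|lborel. h x)"
  have main: "\<bar>D\<bar> \<le> e * H" if e: "e > 0" for e
  proof -
    obtain d where d: "d > 0" and dl: "\<forall>s t. a \<le> s \<longrightarrow> s \<le> t \<longrightarrow> t \<le> b \<longrightarrow> t - s < d \<longrightarrow>
      \<bar>f t - f s - (LINT x:{s..t}|lborel. g x)\<bar> \<le> e * (LINT x:{s..t}|lborel. h x)"
      using loc[OF e] by blast
    define T where "T n = min b (a + real n * (d/2))" for n
    have Tge: "a \<le> T n" "T n \<le> b" for n using ab d by (auto simp: T_def)
    have Tmono: "T n \<le> T (Suc n)" for n unfolding T_def by (rule min.mono) (use d in \<open>auto simp: field_simps\<close>)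
    have Tstep: "T (Suc n) - T n < d" for n unfolding T_def min_def using d by (auto simp: field_simps)
    have P: "\<bar>f (T n) - f a - (LINT x:{a..T n}|lborel. g x)\<bar> \<le> e * (LINT x:{a..T n}|lborel. h x)" for n
    proof (induction n)
      case 0
      have "T 0 = a" using ab by (simp add: T_def)
      then show ?case by (simp add: set_integral_point)
    next
      case (Suc n)
      have igs: "set_integrable lborel {a..T (Suc n)} g" "set_integrable lborel {a..T (Suc n)} h"
        using ig ih Tge[of "Suc n"] by (auto intro!: set_integrable_subset[where A="{a..b}"])
      have sg: "(LINT x:{a..T (Suc n)}|lborel. g x) = (LINT x:{a..T n}|lborel. g x) + (LINT x:{T n..T (Suc n)}|lborel. g x)"
        by (rule set_integral_split) (use Tge Tmono igs in auto)
      have sh: "(LINT x:{a..T (Suc n)}|lborel. h x) = (LINT x:{a..T n}|lborel. h x) + (LINT x:{T n..T (Suc n)}|lborel. h x)"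
        by (rule set_integral_split) (use Tge Tmono igs in auto)
      have l: "\<bar>f (T (Suc n)) - f (T n) - (LINT x:{T n..T (Suc n)}|lborel. g x)\<bar> \<le> e * (LINT x:{T n..T (Suc n)}|lborel. h x)"
        using dl Tge Tmono Tstep by blast
      show ?case using Suc.IH l unfolding sg sh by (simp add: algebra_simps)
    qed
    obtain n where n: "real n > (b - a) / (d/2)" using reals_Archimedean2 by blast
    have "T n = b"
    proof -
      have "(b - a) < real n * (d/2)" using n d by (simp add: field_simps)
      then show ?thesis by (simp add: T_def)
    qed
    then show ?thesis using P[of n] by (simp add: D_def H_def)
  qed
  have "D = 0"
  proof (rule ccontr)
    assume nz: "D \<noteq> 0"
    show False
    proof (cases "H \<le> 0")
      case True
      then show False using main[of 1] nz by simp
    next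
      case False
      have "\<bar>D\<bar> \<le> (\<bar>D\<bar> / (2*H)) * H" by (rule main) (use nz False in auto)
      also have "\<dots> = \<bar>D\<bar>/2" using False by simp
      finally show False using nz by simp
    qed
  qed
  then show ?thesis by (simp add: D_def)
qed



lemma wd_norm_bound:
  fixes v dv :: "real \<Rightarrow> complex"
  assumes "weak_deriv v dv" "s \<le> t"
  shows "norm (v t - v s) \<le> (LINT x:{s..t}|lborel. norm (dv x))"
proof -
  have "set_integrable lborel {s..t} dv" "v t - v s = (LINT x:{s..t}|lborel. dv x)"
    using assms unfolding weak_deriv_def by auto
  then show ?thesis using set_integral_norm_bound by metis
qed

lemma set_le_integral:
  fixes f :: "real \<Rightarrow> real"
  assumes "integrable lborel f" "\<And>x. f x \<ge> 0" "A \<in> sets lborel"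
  shows "(LINT x:A|lborel. f x) \<le> integral\<^sup>L lborel f"
  unfolding set_lebesgue_integral_def
  by (rule integral_mono) (use assms integrable_mult_indicator[OF assms(3) assms(1)] in \<open>auto split: split_indicator\<close>)

lemma small_interval_integral:
  fixes dv :: "real \<Rightarrow> complex"
  assumes wd: "weak_deriv v dv" and i2: "integrable lborel (\<lambda>x. (cmod (dv x))\<^sup>2)"
    and m: "dv \<in> borel_measurable lborel"
    and e: "e > 0"
  shows "\<exists>d>0. \<forall>s t. s \<le> t \<longrightarrow> t - s < d \<longrightarrow> (LINT x:{s..t}|lborel. norm (dv x)) < e"
proof -
  define C where "C = integral\<^sup>L lborel (\<lambda>x. (cmod (dv x))\<^sup>2)"
  have C0: "C \<ge> 0" unfolding C_def by (rule integral_nonneg_AE) auto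
  define \<epsilon> where "\<epsilon> = e / (C + 1)"
  have \<epsilon>0: "\<epsilon> > 0" using e C0 by (simp add: \<epsilon>_def)
  have "\<epsilon> * C < e"
  proof -
    have "\<epsilon> * C = e * (C / (C+1))" by (simp add: \<epsilon>_def)
    also have "\<dots> < e * 1" using e C0 by (intro mult_strict_left_mono) auto
    finally show ?thesis by simp
  qed
  show ?thesis
  proof (intro exI[of _ "e * \<epsilon>"] conjI allI impI)
    show "e * \<epsilon> > 0" using e \<epsilon>0 by simp
    fix s t :: real assume st: "s \<le> t" "t - s < e * \<epsilon>"
    have i1: "set_integrable lborel {s..t} (\<lambda>x. norm (dv x))"
      using wd st unfolding weak_deriv_def by (auto intro: set_integrable_norm)
    have ic: "set_integrable lborel {s..t} (\<lambda>x. 1 / (2*\<epsilon>) :: real)"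
      by (rule borel_integrable_atLeastAtMost') auto
    have isq: "set_integrable lborel {s..t} (\<lambda>x. (cmod (dv x))\<^sup>2)"
      using i2 unfolding set_integrable_def by (rule integrable_mult_indicator[rotated]) auto
    have pw: "norm (dv x) \<le> 1 / (2*\<epsilon>) + \<epsilon>/2 * (cmod (dv x))\<^sup>2" for x
    proof -
      have "0 \<le> (\<epsilon> * norm (dv x) - 1)\<^sup>2" by simp
      then have "2 * \<epsilon> * norm (dv x) \<le> 1 + \<epsilon>\<^sup>2 * (cmod (dv x))\<^sup>2"
        by (simp add: power2_eq_square algebra_simps)
      then show ?thesis using \<epsilon>0 by (simp add: field_simps power2_eq_square)
    qed
    have "(LINT x:{s..t}|lborel. norm (dv x)) \<le> (LINT x:{s..t}|lborel. 1 / (2*\<epsilon>) + \<epsilon>/2 * (cmod (dv x))\<^sup>2)"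
      by (rule set_integral_mono) (use i1 ic isq pw in auto)
    also have "\<dots> = (LINT x:{s..t}|lborel. 1 / (2*\<epsilon>)) + \<epsilon>/2 * (LINT x:{s..t}|lborel. (cmod (dv x))\<^sup>2)"
      using ic isq by (simp add: set_integral_add)
    also have "(LINT x:{s..t}|lborel. 1 / (2*\<epsilon>)) = (t - s) / (2*\<epsilon>)"
      using st by (simp add: set_integral_const)
    also have "(LINT x:{s..t}|lborel. (cmod (dv x))\<^sup>2) \<le> C"
      unfolding C_def by (rule set_le_integral) (use i2 in auto)
    finally have "(LINT x:{s..t}|lborel. norm (dv x)) \<le> (t - s) / (2*\<epsilon>) + \<epsilon>/2 * C"
      using \<epsilon>0 by (simp add: mult_left_mono)
    also have "(t - s) / (2*\<epsilon>) < e / 2" using st \<epsilon>0 by (simp add: field_simps)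
    finally show "(LINT x:{s..t}|lborel. norm (dv x)) < e" using \<open>\<epsilon> * C < e\<close> by simp
  qed
qed

lemma wd_unif_cont:
  fixes v dv :: "real \<Rightarrow> complex"
  assumes wd: "weak_deriv v dv" and i2: "integrable lborel (\<lambda>x. (cmod (dv x))\<^sup>2)"
    and m: "dv \<in> borel_measurable lborel"
  shows "uniformly_continuous_on UNIV v"
  unfolding uniformly_continuous_on_def
proof (intro allI impI)
  fix e :: real assume e: "e > 0"
  obtain d where d: "d > 0" "\<forall>s t. s \<le> t \<longrightarrow> t - s < d \<longrightarrow> (LINT x:{s..t}|lborel. norm (dv x)) < e"
    using small_interval_integral[OF wd i2 m e] by blast
  have *: "norm (v t - v s) < e" if "s \<le> t" "t - s < d" for s t
    using wd_norm_bound[OF wd that(1)] d that by fastforce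
  show "\<exists>d>0. \<forall>x\<in>UNIV. \<forall>x'\<in>UNIV. dist x' x < d \<longrightarrow> dist (v x') (v x) < e"
  proof (intro exI[of _ d] conjI ballI impI)
    fix x x' :: real assume "dist x' x < d"
    then show "dist (v x') (v x) < e"
      using *[of x x'] *[of x' x] by (cases "x \<le> x'") (auto simp: dist_norm dist_real_def norm_minus_commute)
  qed (use d in auto)
qed



lemma Ln_ratio:
  fixes r1 r2 t1 t2 :: real and c :: complex
  assumes "r1 > 0" "r2 > 0" "c \<noteq> 0" "\<bar>t2 - t1\<bar> < pi"
  shows "Im (ln ((of_real r2 * exp (\<i> * of_real t2) * c) / (of_real r1 * exp (\<i> * of_real t1) * c))) = t2 - t1"
proof -
  have ee: "exp (of_real (ln (r2/r1)) :: complex) = of_real (r2/r1)"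
  proof -
    have "exp (of_real (ln (r2/r1)) :: complex) = of_real (exp (ln (r2/r1)))" by (rule exp_of_real)
    also have "exp (ln (r2/r1)) = r2/r1" using assms by simp
    finally show ?thesis .
  qed
  have "(of_real r2 * exp (\<i> * of_real t2) * c) / (of_real r1 * exp (\<i> * of_real t1) * c)
      = exp (of_real (ln (r2/r1)) + \<i> * of_real (t2 - t1))"
    using assms by (simp add: exp_add exp_diff ee field_simps distrib_left right_diff_distrib)
  moreover have "ln (exp (of_real (ln (r2/r1)) + \<i> * of_real (t2 - t1))) = of_real (ln (r2/r1)) + \<i> * of_real (t2 - t1)"
    using assms by (intro Ln_exp) auto
  ultimately show ?thesis by simp
qed



lemma lift_ftc:
  fixes v dv :: "real \<Rightarrow> complex" and \<theta> :: "real \<Rightarrow> real"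
  assumes wd: "weak_deriv v dv" and i2: "integrable lborel (\<lambda>x. (cmod (dv x))\<^sup>2)"
    and mdv: "dv \<in> borel_measurable lborel"
    and ab: "a \<le> b"
    and nz: "\<forall>x\<in>{a..b}. v x \<noteq> 0"
    and th: "continuous_on {a..b} \<theta>"
    and c: "c \<noteq> 0"
    and rep: "\<forall>x\<in>{a..b}. \<exists>r>0. v x = of_real r * exp (\<i> * of_real (\<theta> x)) * c"
  shows "set_integrable lborel {a..b} (\<lambda>x. Im (dv x / v x))"
    and "\<theta> b - \<theta> a = (LINT x:{a..b}|lborel. Im (dv x / v x))"
proof -
  have vc: "continuous_on UNIV v"
    using wd_unif_cont[OF wd i2 mdv] uniformly_continuous_imp_continuous by blast
  have vm: "v \<in> borel_measurable lborel"
    using borel_measurable_continuous_onI[OF vc] by simp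
  have cn: "continuous_on {a..b} (\<lambda>x. norm (v x))"
    using continuous_on_subset[OF vc, of "{a..b}"] by (auto intro: continuous_intros)
  obtain x0 where x0: "x0 \<in> {a..b}" "\<forall>y\<in>{a..b}. norm (v x0) \<le> norm (v y)"
    using continuous_attains_inf[OF compact_Icc _ cn] ab by auto
  define m where "m = norm (v x0)"
  have m0: "m > 0" using nz x0 by (simp add: m_def)
  have mle: "m \<le> norm (v y)" if "y \<in> {a..b}" for y using x0 that by (simp add: m_def)
  have gm: "(\<lambda>x. Im (dv x / v x)) \<in> borel_measurable lborel"
    using vm mdv by measurable
  have hint: "set_integrable lborel {s..t} (\<lambda>x. norm (dv x))" for s t
  proof (cases "s \<le> t")
    case True
    then show ?thesis using wd unfolding weak_deriv_def by (auto intro!: set_integrable_norm)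
  next
    case False
    then show ?thesis by (simp add: set_integrable_def)
  qed
  have gint: "set_integrable lborel {s..t} (\<lambda>x. Im (dv x / v x))" if "a \<le> s" "t \<le> b" for s t
  proof (rule set_integrable_bound[where f="\<lambda>x. norm (dv x) / m"])
    show "set_integrable lborel {s..t} (\<lambda>x. norm (dv x) / m)"
      using hint by (rule set_integrable_divide)
    show "set_borel_measurable lborel {s..t} (\<lambda>x. Im (dv x / v x))"
      unfolding set_borel_measurable_def using gm by measurable
    show "AE x in lborel. x \<in> {s..t} \<longrightarrow> norm (Im (dv x / v x)) \<le> norm (norm (dv x) / m)"
    proof (rule AE_I2, intro impI)
      fix x assume x: "x \<in> {s..t}"
      then have xm: "m \<le> norm (v x)" using mle that by auto
      have "norm (Im (dv x / v x)) \<le> cmod (dv x / v x)" using abs_Im_le_cmod by simp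
      also have "\<dots> = cmod (dv x) / cmod (v x)" by (simp add: norm_divide)
      also have "\<dots> \<le> cmod (dv x) / m" using xm m0 by (intro divide_left_mono) (auto intro!: mult_pos_pos)
      finally show "norm (Im (dv x / v x)) \<le> norm (norm (dv x) / m)" using m0 by simp
    qed
  qed
  then show gab: "set_integrable lborel {a..b} (\<lambda>x. Im (dv x / v x))" by simp
  show "\<theta> b - \<theta> a = (LINT x:{a..b}|lborel. Im (dv x / v x))"
  proof (rule local_to_global[OF ab gab hint])
    fix e :: real assume e: "e > 0"
    have uth: "uniformly_continuous_on {a..b} \<theta>" by (rule compact_uniformly_continuous[OF th]) auto
    have uv: "uniformly_continuous_on {a..b} v"
      by (rule compact_uniformly_continuous[OF continuous_on_subset[OF vc]]) auto
    have uiv: "uniformly_continuous_on {a..b} (\<lambda>x. inverse (v x))"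
      by (rule compact_uniformly_continuous) (use nz continuous_on_subset[OF vc] in \<open>auto intro!: continuous_intros\<close>)
    obtain d1 where d1: "d1 > 0" "\<forall>x\<in>{a..b}. \<forall>x'\<in>{a..b}. dist x' x < d1 \<longrightarrow> dist (\<theta> x') (\<theta> x) < pi"
      using uth unfolding uniformly_continuous_on_def by (meson pi_gt_zero)
    define \<epsilon> where "\<epsilon> = min (m/2) (e * m\<^sup>2 / 4)"
    have \<epsilon>0: "\<epsilon> > 0" using m0 e by (simp add: \<epsilon>_def)
    obtain d2 where d2: "d2 > 0" "\<forall>x\<in>{a..b}. \<forall>x'\<in>{a..b}. dist x' x < d2 \<longrightarrow> dist (v x') (v x) < \<epsilon>"
      using uv \<epsilon>0 unfolding uniformly_continuous_on_def by meson
    obtain d3 where d3: "d3 > 0" "\<forall>x\<in>{a..b}. \<forall>x'\<in>{a..b}. dist x' x < d3 \<longrightarrow> dist (inverse (v x')) (inverse (v x)) < e/2"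
      using uiv e unfolding uniformly_continuous_on_def by (meson half_gt_zero)
    show "\<exists>d>0. \<forall>s t. a \<le> s \<longrightarrow> s \<le> t \<longrightarrow> t \<le> b \<longrightarrow> t - s < d \<longrightarrow>
      \<bar>\<theta> t - \<theta> s - (LINT x:{s..t}|lborel. Im (dv x / v x))\<bar> \<le> e * (LINT x:{s..t}|lborel. norm (dv x))"
    proof (intro exI[of _ "min d1 (min d2 d3)"] conjI allI impI)
      show "min d1 (min d2 d3) > 0" using d1 d2 d3 by simp
      fix s t assume st: "a \<le> s" "s \<le> t" "t \<le> b" "t - s < min d1 (min d2 d3)"
      have sab: "s \<in> {a..b}" and tab: "t \<in> {a..b}" using st by auto
      define I where "I = (LINT x:{s..t}|lborel. norm (dv x))"
      obtain rs where rs: "rs > 0" "v s = of_real rs * exp (\<i> * of_real (\<theta> s)) * c" using rep sab by blast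
      obtain rt where rt: "rt > 0" "v t = of_real rt * exp (\<i> * of_real (\<theta> t)) * c" using rep tab by blast
      have dts: "dist t s < d1" "dist t s < d2" "dist t s < d3" using st by (auto simp: dist_real_def)
      have hth: "\<bar>\<theta> t - \<theta> s\<bar> < pi" using d1 sab tab dts by (auto simp: dist_real_def)
      have L: "\<theta> t - \<theta> s = Im (ln (v t / v s))"
        unfolding rs(2) rt(2) using Ln_ratio[OF rs(1) rt(1) c hth] by simp
      have vs0: "v s \<noteq> 0" using nz sab by blast
      have ms: "m \<le> norm (v s)" using mle sab by blast
      define u where "u = (v t - v s) / v s"
      have vtvs: "v t / v s = 1 + u" using vs0 by (simp add: u_def field_simps)
      have nvd: "norm (v t - v s) \<le> I" unfolding I_def by (rule wd_norm_bound[OF wd st(2)])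
      have nvd2: "norm (v t - v s) < \<epsilon>" using d2 sab tab dts by (auto simp: dist_norm)
      have nu: "norm u \<le> norm (v t - v s) / m"
        unfolding u_def norm_divide using m0 ms by (intro divide_left_mono) (auto intro!: mult_pos_pos)
      have nu1: "norm u \<le> 1/2"
      proof -
        have "norm (v t - v s) / m \<le> (m/2) / m" using nvd2 m0 by (intro divide_right_mono) (auto simp: \<epsilon>_def)
        moreover have "(m/2)/m = 1/2" using m0 by simp
        ultimately show ?thesis using nu by linarith
      qed
      have nu2: "norm u \<le> e * m / 4"
      proof -
        have "norm (v t - v s) / m \<le> (e * m\<^sup>2 / 4) / m" using nvd2 m0 by (intro divide_right_mono) (auto simp: \<epsilon>_def)
        moreover have "(e * m\<^sup>2 / 4) / m = e * m / 4" using m0 by (simp add: power2_eq_square)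
        ultimately show ?thesis using nu by linarith
      qed
      have nu3: "norm u \<le> I / m"
      proof -
        have "norm (v t - v s) / m \<le> I / m" using nvd m0 by (intro divide_right_mono) auto
        then show ?thesis using nu by linarith
      qed
      have lnapp: "norm (ln (1 + u) - u) \<le> 2 * (norm u)\<^sup>2"
      proof -
        have "norm (ln (1 + u) - u) \<le> norm u ^ 2 / (1 - norm u)" by (rule Ln_approx_linear) (use nu1 in auto)
        also have "\<dots> \<le> norm u ^ 2 / (1/2)" using nu1 by (intro divide_left_mono) auto
        finally show ?thesis by simp
      qed
      have A1: "\<bar>Im (ln (1 + u)) - Im u\<bar> \<le> e/2 * I"
      proof -
        have "\<bar>Im (ln (1 + u)) - Im u\<bar> \<le> norm (ln (1 + u) - u)" using abs_Im_le_cmod[of "ln (1 + u) - u"] by simp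
        also have "\<dots> \<le> 2 * (norm u * norm u)" using lnapp by (simp add: power2_eq_square)
        also have "\<dots> \<le> 2 * ((e * m / 4) * (I / m))"
          using nu2 nu3 e m0 by (intro mult_left_mono mult_mono) auto
        also have "\<dots> = e/2 * I" using m0 by (simp add: field_simps)
        finally show ?thesis .
      qed
      have dvint: "set_integrable lborel {s..t} dv" using wd st unfolding weak_deriv_def by auto
      have dvs: "set_integrable lborel {s..t} (\<lambda>r. dv r / v s)" using dvint by auto
      have ueq: "u = (LINT r:{s..t}|lborel. dv r / v s)"
        using wd st unfolding weak_deriv_def u_def by simp
      have Imu: "Im u = (LINT r:{s..t}|lborel. Im (dv r / v s))"
        unfolding ueq by (rule set_integral_Im(2)[OF dvs])
      have i1: "set_integrable lborel {s..t} (\<lambda>r. Im (dv r / v s))" by (rule set_integral_Im(1)[OF dvs])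
      have i2': "set_integrable lborel {s..t} (\<lambda>r. Im (dv r / v r))" using gint st by auto
      have A2: "\<bar>Im u - (LINT r:{s..t}|lborel. Im (dv r / v r))\<bar> \<le> e/2 * I"
      proof -
        have "Im u - (LINT r:{s..t}|lborel. Im (dv r / v r)) = (LINT r:{s..t}|lborel. Im (dv r / v s) - Im (dv r / v r))"
          unfolding Imu using i1 i2' by (simp add: set_integral_diff)
        also have "\<bar>\<dots>\<bar> \<le> (LINT r:{s..t}|lborel. norm (Im (dv r / v s) - Im (dv r / v r)))"
          using set_integral_norm_bound[OF set_integral_diff(1)[OF i1 i2']] by simp
        also have "\<dots> \<le> (LINT r:{s..t}|lborel. e/2 * norm (dv r))"
        proof (rule set_integral_mono)
          show "set_integrable lborel {s..t} (\<lambda>r. norm (Im (dv r / v s) - Im (dv r / v r)))"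
            by (intro set_integrable_norm set_integral_diff(1) i1 i2')
          show "set_integrable lborel {s..t} (\<lambda>r. e / 2 * norm (dv r))" using hint by simp
          fix r assume r: "r \<in> {s..t}"
          then have rab: "r \<in> {a..b}" using st by auto
          have "dist r s < d3" using r dts by (auto simp: dist_real_def)
          then have di: "norm (inverse (v s) - inverse (v r)) \<le> e/2"
            using d3(2) rab sab by (auto simp: dist_norm intro: less_imp_le)
          have "norm (Im (dv r / v s) - Im (dv r / v r)) = \<bar>Im (dv r * (inverse (v s) - inverse (v r)))\<bar>"
            by (simp add: divide_inverse right_diff_distrib)
          also have "\<dots> \<le> norm (dv r * (inverse (v s) - inverse (v r)))" by (rule abs_Im_le_cmod)
          also have "\<dots> = norm (dv r) * norm (inverse (v s) - inverse (v r))" by (simp add: norm_mult)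
          also have "\<dots> \<le> norm (dv r) * (e/2)" using di by (intro mult_left_mono) auto
          finally show "norm (Im (dv r / v s) - Im (dv r / v r)) \<le> e / 2 * norm (dv r)" by (simp add: mult.commute)
        qed
        also have "\<dots> = e/2 * I" unfolding I_def by simp
        finally show ?thesis .
      qed
      have "\<theta> t - \<theta> s = Im (ln (1 + u))" using L vtvs by simp
      then show "\<bar>\<theta> t - \<theta> s - (LINT x:{s..t}|lborel. Im (dv x / v x))\<bar> \<le> e * (LINT x:{s..t}|lborel. norm (dv x))"
        using A1 A2 unfolding I_def[symmetric] by linarith
    qed
  qed
qed



lemma emeasure_density_real:
  fixes f :: "real \<Rightarrow> real"
  assumes fi: "integrable lborel f" and f0: "\<And>x. f x \<ge> 0" and A: "A \<in> sets borel"
  shows "emeasure (density lborel (\<lambda>y. ennreal (f y))) A = ennreal (integral\<^sup>L lborel (\<lambda>y. f y * indicator A y))"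
proof -
  have fm: "f \<in> borel_measurable lborel" using fi by auto
  have "emeasure (density lborel (\<lambda>y. ennreal (f y))) A = (\<integral>\<^sup>+ y. ennreal (f y) * indicator A y \<partial>lborel)"
    by (rule emeasure_density) (use fm A in auto)
  also have "\<dots> = (\<integral>\<^sup>+ y. ennreal (f y * indicator A y) \<partial>lborel)"
    by (intro nn_integral_cong) (auto split: split_indicator)
  also have "\<dots> = ennreal (integral\<^sup>L lborel (\<lambda>y. f y * indicator A y))"
  proof (rule nn_integral_eq_integral)
    show "integrable lborel (\<lambda>y. f y * indicator A y)"
      using integrable_mult_indicator[of A lborel f] fi A by (simp add: mult.commute)
  qed (use f0 in \<open>auto split: split_indicator\<close>)
  finally show ?thesis .
qed

lemma ae_unique:
  fixes k :: "real \<Rightarrow> real"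
  assumes ki: "\<And>x y. x \<le> y \<Longrightarrow> set_integrable lborel {x..y} k"
  and kz: "\<And>x y. x \<le> y \<Longrightarrow> (LINT t:{x..y}|lborel. k t) = 0"
  shows "AE x in lborel. k x = 0"
proof -
  have n: "AE x in lborel. x \<in> {- real n..real n} \<longrightarrow> k x = 0" for n :: nat
  proof -
    define kn where "kn x = indicator {- real n..real n} x * k x" for x
    have kni: "integrable lborel kn" using ki[of "- real n" "real n"] unfolding kn_def[abs_def] by (simp add: set_integrable_def)
    define p where "p x = max 0 (kn x)" for x
    define q where "q x = max 0 (- kn x)" for x
    have pi: "integrable lborel p" unfolding p_def by (intro integrable_max kni) auto
    have qi: "integrable lborel q" unfolding q_def by (intro integrable_max kni integrable_minus) auto
    have pq: "p x - q x = kn x" for x by (simp add: p_def q_def max_def)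
    have zero: "integral\<^sup>L lborel (\<lambda>y. kn y * indicator {x<..} y) = 0" for x
    proof -
      have e1: "integral\<^sup>L lborel (\<lambda>y. kn y * indicator {x<..} y) = (LINT y:({x<..} \<inter> {- real n..real n})|lborel. k y)"
        unfolding set_lebesgue_integral_def kn_def
        by (intro Bochner_Integration.integral_cong) (auto split: split_indicator)
      show ?thesis
      proof (cases "x < - real n")
        case True
        then have "{x<..} \<inter> {- real n..real n} = {- real n..real n}" by auto
        then show ?thesis using e1 kz[of "- real n" "real n"] by simp
      next
        case False
        show ?thesis
        proof (cases "x \<le> real n")
          case True
          have s: "{x<..} \<inter> {- real n..real n} = {x<..real n}" using False by auto
          have "(LINT y:{x<..real n}|lborel. k y) = (LINT y:{x..real n}|lborel. k y)"
          proof (rule set_integral_cong_set)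
            show m1: "set_borel_measurable lborel {x..real n} k"
              using ki[OF True] unfolding set_integrable_def set_borel_measurable_def by (rule borel_measurable_integrable)
            show "set_borel_measurable lborel {x<..real n} k"
              by (rule set_borel_measurable_subset[OF m1]) auto
            show "AE y in lborel. (y \<in> {x..real n}) = (y \<in> {x<..real n})"
              by (rule AE_mp[OF AE_lborel_singleton[of x]]) (auto intro!: AE_I2)
          qed
          then show ?thesis using e1 s kz[OF True] by simp
        next
          case False
          then have "{x<..} \<inter> {- real n..real n} = {}" by auto
          then show ?thesis using e1 by (simp add: set_lebesgue_integral_def)
        qed
      qed
    qed
    have dens: "density lborel (\<lambda>y. ennreal (p y)) = density lborel (\<lambda>y. ennreal (q y))"
    proof (rule measure_eqI_lessThan)
      show "sets (density lborel (\<lambda>y. ennreal (p y))) = sets borel" by simp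
      show "sets (density lborel (\<lambda>y. ennreal (q y))) = sets borel" by simp
      fix x :: real
      show "emeasure (density lborel (\<lambda>y. ennreal (p y))) {x<..} < \<infinity>"
        using emeasure_density_real[OF pi _, of "{x<..}"] by (simp add: p_def)
      have "integral\<^sup>L lborel (\<lambda>y. p y * indicator {x<..} y) - integral\<^sup>L lborel (\<lambda>y. q y * indicator {x<..} y)
          = integral\<^sup>L lborel (\<lambda>y. kn y * indicator {x<..} y)"
      proof -
        have ip: "integrable lborel (\<lambda>y. p y * indicator {x<..} y)"
          using integrable_mult_indicator[of "{x<..}" lborel p] pi by (simp add: mult.commute)
        have iq: "integrable lborel (\<lambda>y. q y * indicator {x<..} y)"
          using integrable_mult_indicator[of "{x<..}" lborel q] qi by (simp add: mult.commute)
        show ?thesis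
          by (subst Bochner_Integration.integral_diff[symmetric, OF ip iq])
             (simp add: pq left_diff_distrib[symmetric] del: left_diff_distrib)
      qed
      then have "integral\<^sup>L lborel (\<lambda>y. p y * indicator {x<..} y) = integral\<^sup>L lborel (\<lambda>y. q y * indicator {x<..} y)"
        using zero[of x] by simp
      then show "emeasure (density lborel (\<lambda>y. ennreal (p y))) {x<..} = emeasure (density lborel (\<lambda>y. ennreal (q y))) {x<..}"
        using emeasure_density_real[OF pi _, of "{x<..}"] emeasure_density_real[OF qi _, of "{x<..}"]
        by (simp add: p_def q_def)
    qed
    have "AE y in lborel. ennreal (p y) = ennreal (q y)"
      by (rule sigma_finite_measure.density_unique[OF sigma_finite_lborel _ _ dens]) (use pi qi in auto)
    then show ?thesis
    proof (rule AE_mp, intro AE_I2 impI)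
      fix y assume "ennreal (p y) = ennreal (q y)" "y \<in> {- real n..real n}"
      then have "p y = q y" by (simp add: p_def q_def)
      then have "kn y = 0" using pq[of y] by simp
      then show "k y = 0" using \<open>y \<in> {- real n..real n}\<close> by (simp add: kn_def)
    qed
  qed
  then have "AE x in lborel. \<forall>n::nat. x \<in> {- real n..real n} \<longrightarrow> k x = 0"
    unfolding AE_all_countable using n by blast
  then show ?thesis
  proof (rule AE_mp, intro AE_I2 impI)
    fix x :: real assume h: "\<forall>n::nat. x \<in> {- real n..real n} \<longrightarrow> k x = 0"
    obtain n :: nat where "\<bar>x\<bar> \<le> real n" using real_arch_simple by blast
    then have "x \<in> {- real n..real n}" by auto
    then show "k x = 0" using h by blast
  qed
qed



lemma integrable_lim_top:
  fixes f :: "real \<Rightarrow> real"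
  assumes fi: "integrable lborel f" and f0: "\<And>x. f x \<ge> 0" and lim: "(f \<longlongrightarrow> c) at_top"
  shows "c = 0"
proof (rule ccontr)
  assume cn: "c \<noteq> 0"
  have "c \<ge> 0" using lim f0 by (intro tendsto_lowerbound[OF lim]) (auto intro: always_eventually)
  then have c0: "c > 0" using cn by simp
  have "eventually (\<lambda>x. f x > c/2) at_top" using lim c0 by (intro order_tendstoD(1)) auto
  then obtain R where R: "\<And>x. x \<ge> R \<Longrightarrow> f x > c/2" by (auto simp: eventually_at_top_linorder)
  define I where "I = integral\<^sup>L lborel f"
  have I0: "I \<ge> 0" unfolding I_def using f0 by (intro integral_nonneg_AE) auto
  define N where "N = 2 * I / c + 1"
  have "2 * I / c \<ge> 0" using I0 c0 by simp
  then have N0: "N > 0" by (simp add: N_def)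
  have i1: "set_integrable lborel {R..R+N} f"
    using fi unfolding set_integrable_def by (intro integrable_mult_indicator) auto
  have i2: "set_integrable lborel {R..R+N} (\<lambda>x. c/2)" by (rule borel_integrable_atLeastAtMost') auto
  have "(LINT x:{R..R+N}|lborel. c/2) \<le> (LINT x:{R..R+N}|lborel. f x)"
    by (rule set_integral_mono[OF i2 i1]) (use R in \<open>auto intro: less_imp_le\<close>)
  also have "\<dots> \<le> I" unfolding I_def by (rule set_le_integral) (use fi f0 in auto)
  finally have "N * (c/2) \<le> I" using N0 by (simp add: set_integral_const)
  moreover have "N * (c/2) = I + c/2" using c0 by (simp add: N_def field_simps)
  ultimately show False using c0 by simp
qed

lemma integrable_lim_bot:
  fixes f :: "real \<Rightarrow> real"
  assumes fi: "integrable lborel f" and f0: "\<And>x. f x \<ge> 0" and lim: "(f \<longlongrightarrow> c) at_bot"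
  shows "c = 0"
proof (rule integrable_lim_top[of "\<lambda>x. f (- x)"])
  show "integrable lborel (\<lambda>x. f (- x))"
    using lborel_integrable_real_affine_iff[of "-1" f 0] fi by simp
  show "((\<lambda>x. f (- x)) \<longlongrightarrow> c) at_top"
    by (rule filterlim_compose[OF lim filterlim_uminus_at_bot_at_top])
qed (use f0 in auto)

lemma lift_near:
  fixes v :: "real \<Rightarrow> complex"
  assumes vc: "continuous_on UNIV v" and l: "cmod l = 1" and S: "\<forall>x\<in>S. cmod (v x - l) < 1/2"
  shows "continuous_on S (\<lambda>x. Im (ln (v x / l)))"
    and "\<forall>x\<in>S. cmod (v x) \<ge> 1/2"
    and "\<forall>x\<in>S. \<exists>r>0. v x = of_real r * exp (\<i> * of_real (Im (ln (v x / l)))) * l"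
proof -
  have l0: "l \<noteq> 0" using l by auto
  have re: "Re (v x / l) > 0" if "x \<in> S" for x
  proof -
    have "v x / l - 1 = (v x - l) / l" using l0 by (simp add: field_simps)
    then have "cmod (v x / l - 1) = cmod (v x - l)" using l by (simp add: norm_divide)
    then have "cmod (v x / l - 1) < 1/2" using S that by simp
    then have "\<bar>Re (v x / l - 1)\<bar> < 1/2" using abs_Re_le_cmod by (meson le_less_trans)
    then have "\<bar>Re (v x / l) - 1\<bar> < 1/2" by simp
    then show ?thesis by linarith
  qed
  then have nz: "v x / l \<notin> \<real>\<^sub>\<le>\<^sub>0" if "x \<in> S" for x using re[OF that] by (auto simp: complex_nonpos_Reals_iff)
  show "continuous_on S (\<lambda>x. Im (ln (v x / l)))"
    by (intro continuous_intros continuous_on_subset[OF vc]) (use nz l0 in auto)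
  show "\<forall>x\<in>S. cmod (v x) \<ge> 1/2"
  proof
    fix x assume "x \<in> S"
    then have "cmod (v x - l) < 1/2" using S by blast
    then show "cmod (v x) \<ge> 1/2" using l norm_triangle_ineq2[of l "v x"] by (simp add: norm_minus_commute)
  qed
  show "\<forall>x\<in>S. \<exists>r>0. v x = of_real r * exp (\<i> * of_real (Im (ln (v x / l)))) * l"
  proof
    fix x assume x: "x \<in> S"
    define w where "w = v x / l"
    have w0: "w \<noteq> 0" using re[OF x] by (auto simp: w_def)
    have "w = exp (ln w)" using w0 by simp
    also have "ln w = of_real (Re (ln w)) + \<i> * of_real (Im (ln w))" by (simp add: complex_eq_iff)
    also have "exp \<dots> = of_real (exp (Re (ln w))) * exp (\<i> * of_real (Im (ln w)))"
      by (simp add: exp_add exp_of_real)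
    finally have "v x = of_real (exp (Re (ln w))) * exp (\<i> * of_real (Im (ln w))) * l"
      using l0 by (simp add: w_def field_simps)
    then show "\<exists>r>0. v x = of_real r * exp (\<i> * of_real (Im (ln (v x / l)))) * l"
      unfolding w_def by (intro exI[of _ "exp (Re (ln (v x / l)))"]) auto
  qed
qed

lemma lift_near_lim:
  fixes v :: "real \<Rightarrow> complex"
  assumes "(v \<longlongrightarrow> l) F" "cmod l = 1"
  shows "((\<lambda>x. Im (ln (v x / l))) \<longlongrightarrow> 0) F"
proof -
  have l0: "l \<noteq> 0" using assms by auto
  have "((\<lambda>x. ln (v x / l)) \<longlongrightarrow> ln (l / l)) F"
    by (intro tendsto_intros assms(1)) (use l0 in \<open>auto simp: complex_nonpos_Reals_iff\<close>)
  then have "((\<lambda>x. Im (ln (v x / l))) \<longlongrightarrow> Im (ln (l / l))) F" by (rule tendsto_Im)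
  then show ?thesis using l0 by simp
qed

lemma cinner_id:
  assumes "v \<noteq> 0"
  shows "cinner (\<i> * v) dv = (cmod v)\<^sup>2 * Im (dv / v)"
proof -
  have "Im (dv / v) = Im (dv * cnj v) / (cmod v)\<^sup>2"
    using assms by (simp add: complex_div_cnj[of dv v] Im_divide_of_real)
  moreover have "(cmod v)\<^sup>2 \<noteq> 0" using assms by simp
  ultimately have "(cmod v)\<^sup>2 * Im (dv / v) = Im (dv * cnj v)" by simp
  moreover have "cinner (\<i> * v) dv = Im (dv * cnj v)" unfolding cinner_def by (simp add: algebra_simps)
  ultimately show ?thesis by simp
qed

lemma w_int:
  fixes v dv :: "real \<Rightarrow> complex"
  assumes i2: "integrable lborel (\<lambda>x. (cmod (dv x))\<^sup>2)"
    and iw: "integrable lborel (\<lambda>x. (1 - (cmod (v x))\<^sup>2)\<^sup>2)"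
    and mdv: "dv \<in> borel_measurable lborel" and mv: "v \<in> borel_measurable lborel"
    and m0: "m > 0" and S: "S \<in> sets borel" and Sm: "\<forall>x\<in>S. m \<le> cmod (v x)"
  shows "set_integrable lborel S (\<lambda>x. ((cmod (v x))\<^sup>2 - 1) * Im (dv x / v x))"
proof (rule set_integrable_bound[where f="\<lambda>x. ((1 - (cmod (v x))\<^sup>2)\<^sup>2 + (cmod (dv x))\<^sup>2) / (2*m)"])
  show "set_integrable lborel S (\<lambda>x. ((1 - (cmod (v x))\<^sup>2)\<^sup>2 + (cmod (dv x))\<^sup>2) / (2*m))"
    unfolding set_integrable_def using S
    by (intro integrable_mult_indicator integrable_divide_zero Bochner_Integration.integrable_add i2 iw) auto
  show "set_borel_measurable lborel S (\<lambda>x. ((cmod (v x))\<^sup>2 - 1) * Im (dv x / v x))"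
    unfolding set_borel_measurable_def using mdv mv S by measurable
  show "AE x in lborel. x \<in> S \<longrightarrow> norm (((cmod (v x))\<^sup>2 - 1) * Im (dv x / v x))
      \<le> norm (((1 - (cmod (v x))\<^sup>2)\<^sup>2 + (cmod (dv x))\<^sup>2) / (2*m))"
  proof (rule AE_I2, intro impI)
    fix x assume x: "x \<in> S"
    define A where "A = \<bar>1 - (cmod (v x))\<^sup>2\<bar>"
    define D where "D = cmod (dv x)"
    have vm: "m \<le> cmod (v x)" using Sm x by blast
    have A0: "A \<ge> 0" and D0: "D \<ge> 0" by (auto simp: A_def D_def)
    have "\<bar>Im (dv x / v x)\<bar> \<le> cmod (dv x / v x)" by (rule abs_Im_le_cmod)
    also have "\<dots> = D / cmod (v x)" by (simp add: norm_divide D_def)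
    also have "\<dots> \<le> D / m" using vm m0 D0 by (intro divide_left_mono) (auto intro!: mult_pos_pos)
    finally have g: "\<bar>Im (dv x / v x)\<bar> \<le> D / m" .
    have "norm (((cmod (v x))\<^sup>2 - 1) * Im (dv x / v x)) = A * \<bar>Im (dv x / v x)\<bar>"
      by (simp add: A_def abs_mult abs_minus_commute)
    also have "\<dots> \<le> A * (D / m)" using g A0 by (rule mult_left_mono)
    also have "\<dots> \<le> (A\<^sup>2 + D\<^sup>2) / (2*m)"
    proof -
      have "2 * (A * D) \<le> A\<^sup>2 + D\<^sup>2" using sum_squares_bound[of A D] by simp
      then show ?thesis using m0 by (simp add: field_simps)
    qed
    also have "\<dots> = norm (((1 - (cmod (v x))\<^sup>2)\<^sup>2 + (cmod (dv x))\<^sup>2) / (2*m))"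
      using m0 by (simp add: A_def D_def power2_abs)
    finally show "norm (((cmod (v x))\<^sup>2 - 1) * Im (dv x / v x))
      \<le> norm (((1 - (cmod (v x))\<^sup>2)\<^sup>2 + (cmod (dv x))\<^sup>2) / (2*m))" .
  qed
qed


lemma wd_measurable:
  fixes f df :: "real \<Rightarrow> real"
  assumes "weak_deriv f df"
  shows "df \<in> borel_measurable lborel"
proof (rule borel_measurable_LIMSEQ_real[where u="\<lambda>n x. indicator {- real n..real n} x * df x"])
  fix n :: nat
  have "set_integrable lborel {- real n..real n} df" using assms unfolding weak_deriv_def by auto
  then show "(\<lambda>x. indicator {- real n..real n} x * df x) \<in> borel_measurable lborel"
    unfolding set_integrable_def by (simp add: borel_measurable_integrable)
next
  fix x :: real
  obtain N :: nat where N: "\<bar>x\<bar> \<le> real N" using real_arch_simple by blast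
  have "eventually (\<lambda>n. indicator {- real n..real n} x * df x = df x) sequentially"
    unfolding eventually_sequentially
  proof (intro exI[of _ N] allI impI)
    fix n assume "n \<ge> N"
    then have "real N \<le> real n" by simp
    then have "x \<in> {- real n..real n}" using N by auto
    then show "indicator {- real n..real n} x * df x = df x" by simp
  qed
  then show "(\<lambda>n. indicator {- real n..real n} x * df x) \<longlonglongrightarrow> df x"
    by (rule tendsto_eventually)
qed


theorem lemma1:
  fixes v dv :: "real \<Rightarrow> complex"
  assumes "Z1 v dv"
  shows "\<exists>P. ((\<lambda>R. 1/2 * (LINT x:{-R..R}|lborel. cinner (\<i> * v x) (dv x))) \<longlongrightarrow> P) at_top
           \<and> (Z1_tilde v dv \<longrightarrow>
               (\<forall>\<phi> :: real \<Rightarrow> real. continuous_on UNIV \<phi> \<and>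
                   (\<forall>x. v x = complex_of_real (cmod (v x)) * exp (\<i> * complex_of_real (\<phi> x))) \<longrightarrow>
                 (\<exists>a b. (\<phi> \<longlongrightarrow> a) at_top \<and> (\<phi> \<longlongrightarrow> b) at_bot
                   \<and> (\<exists>d\<phi>. weak_deriv \<phi> d\<phi>)
                   \<and> (\<forall>d\<phi>. weak_deriv \<phi> d\<phi> \<longrightarrow>
                        integrable lborel (\<lambda>x. ((cmod (v x))\<^sup>2 - 1) * d\<phi> x)
                      \<and> P = 1/2 * (LINT x|lborel. ((cmod (v x))\<^sup>2 - 1) * d\<phi> x) + 1/2 * (a - b)))))"
proof -
  have bd: "bounded (range v)" and wd: "weak_deriv v dv" and mdv: "dv \<in> borel_measurable lborel"
    and i2: "integrable lborel (\<lambda>x. (cmod (dv x))\<^sup>2)"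
    and iw: "integrable lborel (\<lambda>x. (1 - (cmod (v x))\<^sup>2)\<^sup>2)"
    using assms unfolding Z1_def X1_def by auto
  obtain l1 where l1: "(v \<longlongrightarrow> l1) at_top" using assms unfolding Z1_def by auto
  obtain l2 where l2: "(v \<longlongrightarrow> l2) at_bot" using assms unfolding Z1_def by auto
  have vc: "continuous_on UNIV v"
    using wd_unif_cont[OF wd i2 mdv] uniformly_continuous_imp_continuous by blast
  have mv: "v \<in> borel_measurable lborel"
    using borel_measurable_continuous_onI[OF vc] by simp
  obtain B where B: "\<And>x. cmod (v x) \<le> B" using bd unfolding bounded_iff by auto
  have B0: "B \<ge> 0" using B[of 0] norm_ge_zero order_trans by blast
  have nl1: "cmod l1 = 1"
  proof -
    have tl: "((\<lambda>x. (1 - (cmod (v x))\<^sup>2)\<^sup>2) \<longlongrightarrow> (1 - (cmod l1)\<^sup>2)\<^sup>2) at_top" by (intro tendsto_intros l1)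
    have "(1 - (cmod l1)\<^sup>2)\<^sup>2 = 0" using integrable_lim_top[OF iw _ tl] by simp
    then have "(cmod l1)\<^sup>2 = 1\<^sup>2" by simp
    then show ?thesis using power2_eq_imp_eq norm_ge_zero zero_le_one by blast
  qed
  have nl2: "cmod l2 = 1"
  proof -
    have tl: "((\<lambda>x. (1 - (cmod (v x))\<^sup>2)\<^sup>2) \<longlongrightarrow> (1 - (cmod l2)\<^sup>2)\<^sup>2) at_bot" by (intro tendsto_intros l2)
    have "(1 - (cmod l2)\<^sup>2)\<^sup>2 = 0" using integrable_lim_bot[OF iw _ tl] by simp
    then have "(cmod l2)\<^sup>2 = 1\<^sup>2" by simp
    then show ?thesis using power2_eq_imp_eq norm_ge_zero zero_le_one by blast
  qed
  have "eventually (\<lambda>x. dist (v x) l1 < 1/2) at_top" using l1 by (rule tendstoD) simp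
  then obtain R1' where R1': "\<And>x. x \<ge> R1' \<Longrightarrow> dist (v x) l1 < 1/2" by (auto simp: eventually_at_top_linorder)
  define R1 where "R1 = max R1' 0"
  have R1: "\<forall>x\<in>{R1..}. cmod (v x - l1) < 1/2" using R1' by (auto simp: R1_def dist_norm)
  have R10: "R1 \<ge> 0" by (simp add: R1_def)
  have "eventually (\<lambda>x. dist (v x) l2 < 1/2) at_bot" using l2 by (rule tendstoD) simp
  then obtain R2' where R2': "\<And>x. x \<le> R2' \<Longrightarrow> dist (v x) l2 < 1/2" by (auto simp: eventually_at_bot_linorder)
  define R2 where "R2 = min R2' 0"
  have R2: "\<forall>x\<in>{..R2}. cmod (v x - l2) < 1/2" using R2' by (auto simp: R2_def dist_norm)
  have R20: "R2 \<le> 0" by (simp add: R2_def)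
  define g where "g x = Im (dv x / v x)" for x
  define w where "w x = ((cmod (v x))\<^sup>2 - 1) * g x" for x
  define cc where "cc x = cinner (\<i> * v x) (dv x)" for x
  define \<theta>1 where "\<theta>1 x = Im (ln (v x / l1))" for x
  define \<theta>2 where "\<theta>2 x = Im (ln (v x / l2))" for x
  have cont1: "continuous_on {R1..} \<theta>1" and ge1: "\<forall>x\<in>{R1..}. cmod (v x) \<ge> 1/2"
    and rep1: "\<forall>x\<in>{R1..}. \<exists>r>0. v x = of_real r * exp (\<i> * of_real (\<theta>1 x)) * l1"
    using lift_near[OF vc nl1 R1] unfolding \<theta>1_def by auto
  have cont2: "continuous_on {..R2} \<theta>2" and ge2: "\<forall>x\<in>{..R2}. cmod (v x) \<ge> 1/2"
    and rep2: "\<forall>x\<in>{..R2}. \<exists>r>0. v x = of_real r * exp (\<i> * of_real (\<theta>2 x)) * l2"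
    using lift_near[OF vc nl2 R2] unfolding \<theta>2_def by auto
  have lim1: "(\<theta>1 \<longlongrightarrow> 0) at_top" unfolding \<theta>1_def[abs_def] by (rule lift_near_lim[OF l1 nl1])
  have lim2: "(\<theta>2 \<longlongrightarrow> 0) at_bot" unfolding \<theta>2_def[abs_def] by (rule lift_near_lim[OF l2 nl2])
  have l10: "l1 \<noteq> 0" and l20: "l2 \<noteq> 0" using nl1 nl2 by auto
  have hint: "set_integrable lborel {s..t} (\<lambda>x. norm (dv x))" for s t
  proof (cases "s \<le> t")
    case True
    then show ?thesis using wd unfolding weak_deriv_def by (auto intro!: set_integrable_norm)
  next
    case False
    then show ?thesis by (simp add: set_integrable_def)
  qed
  have cdm: "(\<lambda>x. cnj (dv x)) \<in> borel_measurable lborel"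
    by (rule borel_measurable_continuous_on[OF _ mdv]) (intro linear_continuous_on bounded_linear_cnj)
  have ccm: "cc \<in> borel_measurable lborel" unfolding cc_def[abs_def] cinner_def using mv cdm by measurable
  have ccint: "set_integrable lborel {s..t} cc" for s t
  proof (rule set_integrable_bound[where f="\<lambda>x. B * norm (dv x)"])
    show "set_integrable lborel {s..t} (\<lambda>x. B * norm (dv x))" using hint by simp
    show "set_borel_measurable lborel {s..t} cc" unfolding set_borel_measurable_def using ccm by measurable
    show "AE x in lborel. x \<in> {s..t} \<longrightarrow> norm (cc x) \<le> norm (B * norm (dv x))"
    proof (rule AE_I2, intro impI)
      fix x
      have "norm (cc x) \<le> cmod (\<i> * v x * cnj (dv x))" unfolding cc_def cinner_def real_norm_def by (rule abs_Re_le_cmod)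
      also have "\<dots> = cmod (v x) * cmod (dv x)" by (simp add: norm_mult)
      also have "\<dots> \<le> B * cmod (dv x)" using B by (intro mult_right_mono) auto
      finally show "norm (cc x) \<le> norm (B * norm (dv x))" using B0 by simp
    qed
  qed
  have ccw: "cc x = w x + g x" if "v x \<noteq> 0" for x
    using cinner_id[OF that, of "dv x"] unfolding cc_def w_def g_def by (simp add: algebra_simps)
  have wint1: "set_integrable lborel {R1..} w"
    unfolding w_def g_def by (rule w_int[OF i2 iw mdv mv, of "1/2"]) (use ge1 in auto)
  have wint2: "set_integrable lborel {..R2} w"
    unfolding w_def g_def by (rule w_int[OF i2 iw mdv mv, of "1/2"]) (use ge2 in auto)
  have top1: "(LINT x:{R1..R}|lborel. cc x) = (LINT x:{R1..R}|lborel. w x) + (\<theta>1 R - \<theta>1 R1)" if R: "R \<ge> R1" for R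
  proof -
    have nz: "\<forall>x\<in>{R1..R}. v x \<noteq> 0"
    proof
      fix x assume "x \<in> {R1..R}"
      then have "cmod (v x) \<ge> 1/2" using ge1 that by auto
      then show "v x \<noteq> 0" by auto
    qed
    have gi: "set_integrable lborel {R1..R} g" and ge: "\<theta>1 R - \<theta>1 R1 = (LINT x:{R1..R}|lborel. g x)"
      using lift_ftc[OF wd i2 mdv R nz continuous_on_subset[OF cont1] l10] rep1 unfolding g_def by auto
    have wi: "set_integrable lborel {R1..R} w" by (rule set_integrable_subset[OF wint1]) auto
    have "(LINT x:{R1..R}|lborel. cc x) = (LINT x:{R1..R}|lborel. w x + g x)"
      by (rule set_lebesgue_integral_cong) (use nz ccw in auto)
    also have "\<dots> = (LINT x:{R1..R}|lborel. w x) + (LINT x:{R1..R}|lborel. g x)"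
      by (rule set_integral_add(2)[OF wi gi])
    finally show ?thesis using ge by simp
  qed
  have bot1: "(LINT x:{a..R2}|lborel. cc x) = (LINT x:{a..R2}|lborel. w x) + (\<theta>2 R2 - \<theta>2 a)" if a: "a \<le> R2" for a
  proof -
    have nz: "\<forall>x\<in>{a..R2}. v x \<noteq> 0"
    proof
      fix x assume "x \<in> {a..R2}"
      then have "cmod (v x) \<ge> 1/2" using ge2 that by auto
      then show "v x \<noteq> 0" by auto
    qed
    have gi: "set_integrable lborel {a..R2} g" and ge: "\<theta>2 R2 - \<theta>2 a = (LINT x:{a..R2}|lborel. g x)"
      using lift_ftc[OF wd i2 mdv a nz continuous_on_subset[OF cont2] l20] rep2 unfolding g_def by auto
    have wi: "set_integrable lborel {a..R2} w" by (rule set_integrable_subset[OF wint2]) auto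
    have "(LINT x:{a..R2}|lborel. cc x) = (LINT x:{a..R2}|lborel. w x + g x)"
      by (rule set_lebesgue_integral_cong) (use nz ccw in auto)
    also have "\<dots> = (LINT x:{a..R2}|lborel. w x) + (LINT x:{a..R2}|lborel. g x)"
      by (rule set_integral_add(2)[OF wi gi])
    finally show ?thesis using ge by simp
  qed
  have T1: "((\<lambda>R. LINT x:{R1..R}|lborel. cc x) \<longlongrightarrow> (LINT x:{R1..}|lborel. w x) + (0 - \<theta>1 R1)) at_top"
  proof (rule Lim_transform_eventually)
    show "((\<lambda>R. (LINT x:{R1..R}|lborel. w x) + (\<theta>1 R - \<theta>1 R1)) \<longlongrightarrow> (LINT x:{R1..}|lborel. w x) + (0 - \<theta>1 R1)) at_top"
      by (intro tendsto_intros tendsto_set_lebesgue_integral_at_top wint1 lim1) auto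
    show "eventually (\<lambda>R. (LINT x:{R1..R}|lborel. w x) + (\<theta>1 R - \<theta>1 R1) = (LINT x:{R1..R}|lborel. cc x)) at_top"
      using top1 by (auto simp: eventually_at_top_linorder intro!: exI[of _ R1])
  qed
  have T2: "((\<lambda>a. LINT x:{a..R2}|lborel. cc x) \<longlongrightarrow> (LINT x:{..R2}|lborel. w x) + (\<theta>2 R2 - 0)) at_bot"
  proof (rule Lim_transform_eventually)
    show "((\<lambda>a. (LINT x:{a..R2}|lborel. w x) + (\<theta>2 R2 - \<theta>2 a)) \<longlongrightarrow> (LINT x:{..R2}|lborel. w x) + (\<theta>2 R2 - 0)) at_bot"
      by (intro tendsto_intros tendsto_set_lebesgue_integral_at_bot wint2 lim2) auto
    show "eventually (\<lambda>a. (LINT x:{a..R2}|lborel. w x) + (\<theta>2 R2 - \<theta>2 a) = (LINT x:{a..R2}|lborel. cc x)) at_bot"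
      using bot1 by (auto simp: eventually_at_bot_linorder intro!: exI[of _ R2])
  qed
  have T2': "((\<lambda>R. LINT x:{-R..R2}|lborel. cc x) \<longlongrightarrow> (LINT x:{..R2}|lborel. w x) + (\<theta>2 R2 - 0)) at_top"
    using filterlim_compose[OF T2 filterlim_uminus_at_bot_at_top] by simp
  define Mid where "Mid = (LINT x:{R2..R1}|lborel. cc x)"
  define P0 where "P0 = ((LINT x:{..R2}|lborel. w x) + (\<theta>2 R2 - 0)) + Mid + ((LINT x:{R1..}|lborel. w x) + (0 - \<theta>1 R1))"
  have splitR: "(LINT x:{-R..R}|lborel. cc x) = (LINT x:{-R..R2}|lborel. cc x) + Mid + (LINT x:{R1..R}|lborel. cc x)"
    if R: "R \<ge> R1" "- R \<le> R2" for R
  proof -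
    have "(LINT x:{-R..R}|lborel. cc x) = (LINT x:{-R..R2}|lborel. cc x) + (LINT x:{R2..R}|lborel. cc x)"
      by (rule set_integral_split) (use R R10 R20 ccint in auto)
    also have "(LINT x:{R2..R}|lborel. cc x) = Mid + (LINT x:{R1..R}|lborel. cc x)"
      unfolding Mid_def by (rule set_integral_split) (use R R10 R20 ccint in auto)
    finally show ?thesis by simp
  qed
  have PL: "((\<lambda>R. 1/2 * (LINT x:{-R..R}|lborel. cc x)) \<longlongrightarrow> 1/2 * P0) at_top"
  proof (rule Lim_transform_eventually)
    show "((\<lambda>R. 1/2 * ((LINT x:{-R..R2}|lborel. cc x) + Mid + (LINT x:{R1..R}|lborel. cc x))) \<longlongrightarrow> 1/2 * P0) at_top"
      unfolding P0_def by (intro tendsto_intros T1 T2')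
    show "eventually (\<lambda>R. 1/2 * ((LINT x:{-R..R2}|lborel. cc x) + Mid + (LINT x:{R1..R}|lborel. cc x))
        = 1/2 * (LINT x:{-R..R}|lborel. cc x)) at_top"
      unfolding eventually_at_top_linorder
      by (intro exI[of _ "max R1 (- R2)"] allI impI) (simp add: splitR)
  qed
  have part1: "((\<lambda>R. 1/2 * (LINT x:{-R..R}|lborel. cinner (\<i> * v x) (dv x))) \<longlongrightarrow> 1/2 * P0) at_top"
    using PL unfolding cc_def .
  show ?thesis
  proof (rule exI[of _ "1/2 * P0"], intro conjI impI allI part1)
    fix \<phi> :: "real \<Rightarrow> real"
    assume Zt: "Z1_tilde v dv"
      and \<phi>: "continuous_on UNIV \<phi> \<and> (\<forall>x. v x = complex_of_real (cmod (v x)) * exp (\<i> * complex_of_real (\<phi> x)))"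
    have nz: "v x \<noteq> 0" for x using Zt unfolding Z1_tilde_def by (metis norm_zero less_irrefl)
    have \<phi>c: "continuous_on UNIV \<phi>" using \<phi> by blast
    have rep: "\<forall>x\<in>{s..t}. \<exists>r>0. v x = of_real r * exp (\<i> * of_real (\<phi> x)) * 1" for s t
    proof
      fix x assume "x \<in> {s..t}"
      show "\<exists>r>0. v x = of_real r * exp (\<i> * of_real (\<phi> x)) * 1"
        using \<phi> nz[of x] by (intro exI[of _ "cmod (v x)"]) auto
    qed
    have gI: "set_integrable lborel {s..t} g \<and> \<phi> t - \<phi> s = (LINT x:{s..t}|lborel. g x)" if st: "s \<le> t" for s t
    proof -
      have nzs: "\<forall>x\<in>{s..t}. v x \<noteq> 0" using nz by blast
      show ?thesis
        using lift_ftc[OF wd i2 mdv st nzs continuous_on_subset[OF \<phi>c] one_neq_zero rep] unfolding g_def[abs_def] by auto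
    qed
    have wdphi: "weak_deriv \<phi> g" unfolding weak_deriv_def using gI by blast
    define a where "a = \<phi> R1 - \<theta>1 R1"
    define b where "b = \<phi> R2 - \<theta>2 R2"
    have \<phi>top: "\<phi> R = a + \<theta>1 R" if R: "R \<ge> R1" for R
    proof -
      have nzs: "\<forall>x\<in>{R1..R}. v x \<noteq> 0" using nz by blast
      have "\<theta>1 R - \<theta>1 R1 = (LINT x:{R1..R}|lborel. g x)"
        using lift_ftc[OF wd i2 mdv R nzs continuous_on_subset[OF cont1] l10] rep1 unfolding g_def by auto
      then show ?thesis using gI[OF R] by (simp add: a_def)
    qed
    have \<phi>bot: "\<phi> s = b + \<theta>2 s" if s: "s \<le> R2" for s
    proof -
      have nzs: "\<forall>x\<in>{s..R2}. v x \<noteq> 0" using nz by blast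
      have "\<theta>2 R2 - \<theta>2 s = (LINT x:{s..R2}|lborel. g x)"
        using lift_ftc[OF wd i2 mdv s nzs continuous_on_subset[OF cont2] l20] rep2 unfolding g_def by auto
      then show ?thesis using gI[OF s] by (simp add: b_def)
    qed
    have la: "(\<phi> \<longlongrightarrow> a) at_top"
    proof (rule Lim_transform_eventually)
      show "((\<lambda>R. a + \<theta>1 R) \<longlongrightarrow> a) at_top" using tendsto_add[OF tendsto_const lim1, of a] by simp
      show "eventually (\<lambda>R. a + \<theta>1 R = \<phi> R) at_top"
        unfolding eventually_at_top_linorder using \<phi>top by (intro exI[of _ R1]) auto
    qed
    have lb: "(\<phi> \<longlongrightarrow> b) at_bot"
    proof (rule Lim_transform_eventually)
      show "((\<lambda>R. b + \<theta>2 R) \<longlongrightarrow> b) at_bot" using tendsto_add[OF tendsto_const lim2, of b] by simp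
      show "eventually (\<lambda>R. b + \<theta>2 R = \<phi> R) at_bot"
        unfolding eventually_at_bot_linorder using \<phi>bot by (intro exI[of _ R2]) auto
    qed
    have cn: "continuous_on {R2..R1} (\<lambda>x. norm (v x))"
      using continuous_on_subset[OF vc, of "{R2..R1}"] by (auto intro: continuous_intros)
    obtain x0 where x0: "x0 \<in> {R2..R1}" "\<forall>y\<in>{R2..R1}. norm (v x0) \<le> norm (v y)"
      using continuous_attains_inf[OF compact_Icc _ cn] R10 R20 by auto
    define m where "m = min (1/2) (norm (v x0))"
    have m0: "m > 0" using nz[of x0] by (simp add: m_def)
    have mle: "\<forall>x\<in>UNIV. m \<le> cmod (v x)"
    proof
      fix x :: real
      show "m \<le> cmod (v x)"
      proof (cases "x \<ge> R1")
        case True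
        then have "cmod (v x) \<ge> 1/2" using ge1 by auto
        then show ?thesis by (simp add: m_def min_le_iff_disj)
      next
        case False
        show ?thesis
        proof (cases "x \<le> R2")
          case True
          then have "cmod (v x) \<ge> 1/2" using ge2 by auto
          then show ?thesis by (simp add: m_def min_le_iff_disj)
        next
          case False2: False
          then have "x \<in> {R2..R1}" using False by auto
          then have "cmod (v x0) \<le> cmod (v x)" using x0 by auto
          then show ?thesis by (simp add: m_def min_le_iff_disj)
        qed
      qed
    qed
    have wI: "integrable lborel w"
    proof -
      have "set_integrable lborel UNIV w"
        unfolding w_def g_def by (rule w_int[OF i2 iw mdv mv m0 _ mle]) auto
      then show ?thesis by (simp add: set_integrable_def)
    qed
    have wm: "w \<in> borel_measurable lborel" using wI by auto
    have wS: "set_integrable lborel S w" if "S \<in> sets borel" for S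
      using integrable_mult_indicator[of S lborel w] wI that by (simp add: set_integrable_def)
    show "\<exists>a b. (\<phi> \<longlongrightarrow> a) at_top \<and> (\<phi> \<longlongrightarrow> b) at_bot \<and> (\<exists>d\<phi>. weak_deriv \<phi> d\<phi>) \<and>
          (\<forall>d\<phi>. weak_deriv \<phi> d\<phi> \<longrightarrow> integrable lborel (\<lambda>x. ((cmod (v x))\<^sup>2 - 1) * d\<phi> x) \<and>
             1/2 * P0 = 1/2 * (LINT x|lborel. ((cmod (v x))\<^sup>2 - 1) * d\<phi> x) + 1/2 * (a - b))"
    proof (rule exI[of _ a], rule exI[of _ b], intro conjI allI impI la lb exI[of _ g] wdphi)
      fix d\<phi> assume wdd: "weak_deriv \<phi> d\<phi>"
      have dm: "d\<phi> \<in> borel_measurable lborel" by (rule wd_measurable[OF wdd])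
      have ae: "AE x in lborel. d\<phi> x - g x = 0"
      proof (rule ae_unique)
        fix s t :: real assume st: "s \<le> t"
        have i1: "set_integrable lborel {s..t} d\<phi>" and e1: "\<phi> t - \<phi> s = (LINT x:{s..t}|lborel. d\<phi> x)"
          using wdd st unfolding weak_deriv_def by auto
        have i2: "set_integrable lborel {s..t} g" and e2: "\<phi> t - \<phi> s = (LINT x:{s..t}|lborel. g x)"
          using gI[OF st] by auto
        show "set_integrable lborel {s..t} (\<lambda>x. d\<phi> x - g x)" by (rule set_integral_diff(1)[OF i1 i2])
        show "(LINT x:{s..t}|lborel. d\<phi> x - g x) = 0"
          using set_integral_diff(2)[OF i1 i2] e1 e2 by simp
      qed
      have ae2: "AE x in lborel. w x = ((cmod (v x))\<^sup>2 - 1) * d\<phi> x"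
        using ae by eventually_elim (simp add: w_def)
      have m2: "(\<lambda>x. ((cmod (v x))\<^sup>2 - 1) * d\<phi> x) \<in> borel_measurable lborel" using mv dm by measurable
      show "integrable lborel (\<lambda>x. ((cmod (v x))\<^sup>2 - 1) * d\<phi> x)"
        by (rule integrable_cong_AE_imp[OF wI m2 ae2])
      have ieq: "(LINT x|lborel. ((cmod (v x))\<^sup>2 - 1) * d\<phi> x) = integral\<^sup>L lborel w"
        by (rule integral_cong_AE[OF m2 wm]) (use ae2 in \<open>auto elim: AE_mp\<close>)
      have wsplit: "(LINT x:{-R..R}|lborel. w x) = (LINT x:{-R..0}|lborel. w x) + (LINT x:{0..R}|lborel. w x)"
        if "R \<ge> 0" for R
        by (rule set_integral_split) (use that wS in auto)
      have wU: "(LINT x:{..0}|lborel. w x) + (LINT x:{0..}|lborel. w x) = integral\<^sup>L lborel w"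
      proof -
        have "(LINT x:{..0} \<union> {0..}|lborel. w x) = (LINT x:{..0}|lborel. w x) + (LINT x:{0..}|lborel. w x)"
          by (rule set_integral_Un_AE)
             (use wS AE_lborel_singleton[of 0] in \<open>auto elim: AE_mp\<close>)
        moreover have "{..0} \<union> {0..} = (UNIV :: real set)" by auto
        ultimately show ?thesis by (simp add: set_lebesgue_integral_def)
      qed
      have Tw1: "((\<lambda>R. LINT x:{0..R}|lborel. w x) \<longlongrightarrow> (LINT x:{0..}|lborel. w x)) at_top"
        by (rule tendsto_set_lebesgue_integral_at_top) (use wS in auto)
      have Tw2: "((\<lambda>a. LINT x:{a..0}|lborel. w x) \<longlongrightarrow> (LINT x:{..0}|lborel. w x)) at_bot"
        by (rule tendsto_set_lebesgue_integral_at_bot) (use wS in auto)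
      have Tw2': "((\<lambda>R. LINT x:{-R..0}|lborel. w x) \<longlongrightarrow> (LINT x:{..0}|lborel. w x)) at_top"
        using filterlim_compose[OF Tw2 filterlim_uminus_at_bot_at_top] by simp
      have lb': "((\<lambda>R. \<phi> (- R)) \<longlongrightarrow> b) at_top"
        using filterlim_compose[OF lb filterlim_uminus_at_bot_at_top] by simp
      have ccR: "(LINT x:{-R..R}|lborel. cc x) = ((LINT x:{-R..0}|lborel. w x) + (LINT x:{0..R}|lborel. w x)) + (\<phi> R - \<phi> (- R))"
        if R: "R \<ge> 0" for R
      proof -
        have R': "- R \<le> R" using R by simp
        have wi: "set_integrable lborel {-R..R} w"
          by (rule wS) auto
        have "(LINT x:{-R..R}|lborel. cc x) = (LINT x:{-R..R}|lborel. w x + g x)"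
          by (rule set_lebesgue_integral_cong) (use nz ccw in auto)
        also have "\<dots> = (LINT x:{-R..R}|lborel. w x) + (LINT x:{-R..R}|lborel. g x)"
          using gI[OF R'] wi by (intro set_integral_add(2)) auto
        finally show ?thesis using gI[OF R'] wsplit[OF R] by simp
      qed
      have PL2: "((\<lambda>R. 1/2 * (LINT x:{-R..R}|lborel. cc x)) \<longlongrightarrow>
                1/2 * (((LINT x:{..0}|lborel. w x) + (LINT x:{0..}|lborel. w x)) + (a - b))) at_top"
      proof (rule Lim_transform_eventually)
        show "((\<lambda>R. 1/2 * (((LINT x:{-R..0}|lborel. w x) + (LINT x:{0..R}|lborel. w x)) + (\<phi> R - \<phi> (- R)))) \<longlongrightarrow>
                1/2 * (((LINT x:{..0}|lborel. w x) + (LINT x:{0..}|lborel. w x)) + (a - b))) at_top"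
          by (intro tendsto_intros Tw1 Tw2' la lb')
        show "eventually (\<lambda>R. 1/2 * (((LINT x:{-R..0}|lborel. w x) + (LINT x:{0..R}|lborel. w x)) + (\<phi> R - \<phi> (- R)))
               = 1/2 * (LINT x:{-R..R}|lborel. cc x)) at_top"
          unfolding eventually_at_top_linorder using ccR by (intro exI[of _ 0]) auto
      qed
      have "1/2 * P0 = 1/2 * (((LINT x:{..0}|lborel. w x) + (LINT x:{0..}|lborel. w x)) + (a - b))"
        by (rule tendsto_unique[OF _ PL PL2]) simp
      then show "1/2 * P0 = 1/2 * (LINT x|lborel. ((cmod (v x))\<^sup>2 - 1) * d\<phi> x) + 1/2 * (a - b)"
        unfolding ieq wU by (simp only: distrib_left)
    qed
  qed
qed

end
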